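(* Let $n\in\mathbb N$, $\varepsilon,h,d>0$, $q\in(0,1)$. Let $\bar u\in(q,1)$ be a root of $g(u):=u(1-u)(u+q)-\varepsilon hq(u-q)$, and set $S:=(q,\bar u)^2\subset\mathbb R^2$. Let $u_0,v_0\in BUC(\mathbb R^n)$ with $(u_0(x),v_0(x))\in S$ for all $x\in\mathbb R^n$, and let $(u,v)$ be the time-global non-negative classical solution of (BZ) with these initial data. Then $(u(x,t),v(x,t))\in S$ for all $x\in\mathbb R^n$ and all $t>0$.
   Context: $BUC(\mathbb R^n)$ denotes the bounded uniformly continuous functions on $\mathbb R^n$ with the sup norm. (BZ) is the system $\partial_t u=\Delta u+\frac1\varepsilon u(1-u)-hv\frac{u-q}{u+q}$, $\partial_t v=d\Delta v-v+u$ in $\mathbb R^n\times(0,\infty)$, $u|_{t=0}=u_0$, $v|_{t=0}=v_0$. For non-negative $u_0,v_0\in BUC$ there is a unique global non-negative classical solution $(u,v)\in C([0,\infty);BUC(\mathbb R^n))^2$ ($C^1$ in $t$, $C^2$ in $x$ for $t>0$). *)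

theory Defs
  imports "HOL-Analysis.Analysis"
begin

definition BUC :: "(real^'n \<Rightarrow> real) set" where
  "BUC = {f. bounded (range f) \<and> uniformly_continuous_on UNIV f}"

definition C_BUC :: "(real^'n \<Rightarrow> real \<Rightarrow> real) \<Rightarrow> bool" where
  "C_BUC w \<longleftrightarrow>
     (\<forall>t\<ge>0. (\<lambda>x. w x t) \<in> BUC) \<and>
     (\<forall>t\<ge>0. \<forall>e>0. \<exists>\<delta>>0. \<forall>s\<ge>0. \<bar>s - t\<bar> < \<delta> \<longrightarrow> (\<forall>x. \<bar>w x s - w x t\<bar> \<le> e))"

definition classical_reg ::
  "(real^'n \<Rightarrow> real \<Rightarrow> real) \<Rightarrow> (real^'n \<Rightarrow> real \<Rightarrow> real) \<Rightarrow>
   (real^'n \<Rightarrow> real \<Rightarrow> real^'n) \<Rightarrow> (real^'n \<Rightarrow> real \<Rightarrow> real^'n^'n) \<Rightarrow> bool" where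
  "classical_reg w wt Dw D2w \<longleftrightarrow>
     (\<forall>x. \<forall>t>0. ((\<lambda>s. w x s) has_real_derivative wt x t) (at t)) \<and>
     (\<forall>x. continuous_on {0<..} (\<lambda>s. wt x s)) \<and>
     (\<forall>x. \<forall>t>0. ((\<lambda>y. w y t) has_derivative (\<lambda>k. Dw x t \<bullet> k)) (at x)) \<and>
     (\<forall>x. \<forall>t>0. ((\<lambda>y. Dw y t) has_derivative (\<lambda>k. D2w x t *v k)) (at x)) \<and>
     (\<forall>t>0. continuous_on UNIV (\<lambda>y. D2w y t))"

definition lap_of :: "real^'n^'n \<Rightarrow> real" where
  "lap_of H = (\<Sum>i\<in>UNIV. H $ i $ i)"

definition BZ_solution ::
  "real \<Rightarrow> real \<Rightarrow> real \<Rightarrow> real \<Rightarrow> (real^'n \<Rightarrow> real) \<Rightarrow> (real^'n \<Rightarrow> real) \<Rightarrow>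
   (real^'n \<Rightarrow> real \<Rightarrow> real) \<Rightarrow> (real^'n \<Rightarrow> real \<Rightarrow> real) \<Rightarrow> bool" where
  "BZ_solution \<epsilon> h q d u0 v0 u v \<longleftrightarrow>
     C_BUC u \<and> C_BUC v \<and>
     (\<forall>x. u x 0 = u0 x) \<and> (\<forall>x. v x 0 = v0 x) \<and>
     (\<forall>x. \<forall>t\<ge>0. u x t \<ge> 0 \<and> v x t \<ge> 0) \<and>
     (\<exists>ut Du D2u vt Dv D2v.
        classical_reg u ut Du D2u \<and> classical_reg v vt Dv D2v \<and>
        (\<forall>x. \<forall>t>0.
           ut x t = lap_of (D2u x t) + (1/\<epsilon>) * u x t * (1 - u x t)
                     - h * v x t * (u x t - q) / (u x t + q) \<and>
           vt x t = d * lap_of (D2v x t) - v x t + u x t))"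

end

theory Submission
  imports Defs
begin

lemma second_deriv_min:
  fixes \<phi> \<phi>' :: "real \<Rightarrow> real"
  assumes eta: "\<eta> > 0" and mn: "\<And>r. \<bar>r\<bar> < \<eta> \<Longrightarrow> \<phi> r \<ge> \<phi> 0"
    and d1: "\<And>r. (\<phi> has_real_derivative \<phi>' r) (at r)"
    and d2: "(\<phi>' has_real_derivative c) (at 0)"
  shows "c \<ge> 0"
proof (rule ccontr)
  assume "\<not> c \<ge> 0" hence c: "c < 0" by simp
  have z: "\<phi>' 0 = 0"
    by (rule DERIV_local_min[OF d1[of 0] eta]) (use mn in auto)
  obtain d where d: "d > 0" "\<forall>h>0. h < d \<longrightarrow> \<phi>' 0 > \<phi>' (0 + h)"
    using DERIV_neg_dec_right[OF d2 c] by blast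
  define h0 where "h0 = min d \<eta> / 2"
  have h0: "h0 > 0" "h0 < d" "h0 < \<eta>" using d eta by (auto simp: h0_def)
  obtain z where zz: "z > 0" "z < h0" "\<phi> h0 - \<phi> 0 = (h0 - 0) * \<phi>' z"
    using MVT2[of 0 h0 \<phi> \<phi>'] d1 h0 by auto
  have "\<phi>' z < 0" using d zz h0 z by auto
  hence "h0 * \<phi>' z < 0" using h0 by (simp add: mult_pos_neg)
  hence "\<phi> h0 < \<phi> 0" using zz by simp
  moreover have "\<phi> h0 \<ge> \<phi> 0" using mn h0 by auto
  ultimately show False by simp
qed

lemma strip_bound:
  assumes "C_BUC w" shows "\<exists>M. \<forall>x. \<forall>t\<in>{0..T}. \<bar>w x t\<bar> \<le> M"
proof -
  define f where "f t = Bcontfun (\<lambda>x. w x t)" for t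
  have mem: "(\<lambda>x. w x t) \<in> bcontfun" if "t \<ge> 0" for t
    using assms that unfolding C_BUC_def BUC_def bcontfun_def
    by (auto intro: uniformly_continuous_imp_continuous)
  have app: "apply_bcontfun (f t) = (\<lambda>x. w x t)" if "t \<ge> 0" for t
    using mem[OF that] by (simp add: f_def Bcontfun_inverse)
  have "continuous_on {0..T} f"
    unfolding continuous_on_iff
  proof (intro ballI allI impI)
    fix t e :: real assume t: "t \<in> {0..T}" and e: "e > 0"
    obtain d where d: "d > 0" "\<forall>s\<ge>0. \<bar>s - t\<bar> < d \<longrightarrow> (\<forall>x. \<bar>w x s - w x t\<bar> \<le> e/2)"
      using assms t e unfolding C_BUC_def by (meson atLeastAtMost_iff half_gt_zero)
    show "\<exists>d>0. \<forall>s\<in>{0..T}. dist s t < d \<longrightarrow> dist (f s) (f t) < e"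
    proof (intro exI[of _ d] conjI ballI impI)
      fix s assume s: "s \<in> {0..T}" "dist s t < d"
      have "dist (f s) (f t) \<le> e/2"
      proof (rule dist_bound)
        fix x show "dist (f s x) (f t x) \<le> e/2"
          using app[of s] app[of t] s t d by (auto simp: dist_real_def)
      qed
      thus "dist (f s) (f t) < e" using e by simp
    qed (use d in auto)
  qed
  hence "compact (f ` {0..T})" by (rule compact_continuous_image) simp
  hence "bounded (f ` {0..T})" by (rule compact_imp_bounded)
  then obtain M where M: "\<forall>g\<in>f ` {0..T}. norm g \<le> M" by (auto simp: bounded_iff)
  show ?thesis
  proof (intro exI[of _ M] allI ballI)
    fix x t assume t: "t \<in> {0..T}"
    have "\<bar>w x t\<bar> = norm (apply_bcontfun (f t) x)" using app[of t] t by simp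
    also have "\<dots> \<le> norm (f t)" by (rule norm_bounded)
    also have "\<dots> \<le> M" using M t by auto
    finally show "\<bar>w x t\<bar> \<le> M" .
  qed
qed

lemma joint_cont:
  assumes "C_BUC w" shows "continuous_on (UNIV \<times> {0..}) (\<lambda>p. w (fst p) (snd p))"
  unfolding continuous_on_iff
proof (intro ballI allI impI)
  fix p :: "(real^'a) \<times> real" and e :: real assume p: "p \<in> UNIV \<times> {0..}" and e: "e > 0"
  obtain x t where pxt: "p = (x,t)" by (cases p)
  have t: "t \<ge> 0" using p pxt by auto
  have e4: "e/4 > 0" using e by simp
  have "\<forall>t\<ge>0. \<forall>e>0. \<exists>\<delta>>0. \<forall>s\<ge>0. \<bar>s - t\<bar> < \<delta> \<longrightarrow> (\<forall>x. \<bar>w x s - w x t\<bar> \<le> e)"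
    using assms unfolding C_BUC_def by blast
  then obtain d1 where d1: "d1 > 0" and d1': "\<And>s y. s\<ge>0 \<Longrightarrow> \<bar>s - t\<bar> < d1 \<Longrightarrow> \<bar>w y s - w y t\<bar> \<le> e/4"
    using t e4 by meson
  have "uniformly_continuous_on UNIV (\<lambda>x. w x t)" using assms t unfolding C_BUC_def BUC_def by auto
  moreover have e2: "e/2 > 0" using e by simp
  ultimately obtain d2 where d2: "d2 > 0" and d2': "\<And>y y'. dist y' y < d2 \<Longrightarrow> dist (w y' t) (w y t) < e/2"
    unfolding uniformly_continuous_on_def by (meson UNIV_I)
  show "\<exists>d>0. \<forall>p'\<in>UNIV \<times> {0..}. dist p' p < d \<longrightarrow> dist (w (fst p') (snd p')) (w (fst p) (snd p)) < e"
  proof (intro exI[of _ "min d1 d2"] conjI ballI impI)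
    fix p' :: "(real^'a) \<times> real" assume p': "p' \<in> UNIV \<times> {0..}" "dist p' p < min d1 d2"
    obtain y s where pys: "p' = (y,s)" by (cases p')
    have a1: "dist y x < d2" using dist_fst_le[of p' p] p' pys pxt by auto
    have a2: "\<bar>s - t\<bar> < d1" using dist_snd_le[of p' p] p' pys pxt by (auto simp: dist_real_def)
    have a3: "s \<ge> 0" using p' pys by auto
    have b1: "\<bar>w y s - w y t\<bar> \<le> e/4" by (rule d1'[OF a3 a2])
    have b2: "\<bar>w y t - w x t\<bar> < e/2" using d2'[OF a1] by (simp add: dist_real_def)
    have "\<bar>w y s - w x t\<bar> < e" using b1 b2 e by linarith
    thus "dist (w (fst p') (snd p')) (w (fst p) (snd p)) < e" using pys pxt
      by (simp add: dist_real_def)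
  qed (use d1 d2 in auto)
qed

lemma dir_deriv1:
  fixes g :: "real^'n \<Rightarrow> real"
  assumes "(g has_derivative (\<lambda>k. G \<bullet> k)) (at (x + r *\<^sub>R axis i 1))"
  shows "((\<lambda>r. g (x + r *\<^sub>R axis i 1)) has_real_derivative (G $ i)) (at r)"
proof -
  have f: "((\<lambda>r. x + r *\<^sub>R axis i (1::real)) has_derivative (\<lambda>h. h *\<^sub>R axis i 1)) (at r)"
    by (auto intro!: derivative_eq_intros)
  have "((\<lambda>r. g (x + r *\<^sub>R axis i 1)) has_derivative (\<lambda>h. G \<bullet> (h *\<^sub>R axis i 1))) (at r)"
    by (rule has_derivative_compose[OF f assms])
  moreover have "(\<lambda>h. G \<bullet> (h *\<^sub>R axis i 1)) = (*) (G $ i)"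
    by (auto simp: inner_axis)
  ultimately show ?thesis by (simp add: has_field_derivative_def)
qed

lemma dir_deriv2:
  fixes D :: "real^'n \<Rightarrow> real^'n"
  assumes "(D has_derivative (\<lambda>k. H *v k)) (at x)"
  shows "((\<lambda>r. D (x + r *\<^sub>R axis i 1) $ i) has_real_derivative (H $ i $ i)) (at 0)"
proof -
  have f: "((\<lambda>r. x + r *\<^sub>R axis i (1::real)) has_derivative (\<lambda>h. h *\<^sub>R axis i 1)) (at 0)"
    by (auto intro!: derivative_eq_intros)
  have "((\<lambda>r. D (x + r *\<^sub>R axis i 1)) has_derivative (\<lambda>h. H *v (h *\<^sub>R axis i 1))) (at 0)"
    using has_derivative_compose[OF f] assms by simp
  hence "((\<lambda>r. D (x + r *\<^sub>R axis i 1) $ i) has_derivative (\<lambda>h. (H *v (h *\<^sub>R axis i 1)) $ i)) (at 0)"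
    by (rule has_derivative_compose[OF _ bounded_linear.has_derivative[OF bounded_linear_vec_nth has_derivative_ident]])
  moreover have "(\<lambda>h. (H *v (h *\<^sub>R axis i 1)) $ i) = (*) (H $ i $ i)"
    by (auto simp: matrix_vector_mult_def axis_def if_distrib cong: if_cong)
  ultimately show ?thesis by (simp add: has_field_derivative_def)
qed

lemma norm_axis_sq:
  fixes x :: "real^'n"
  shows "norm (x + r *\<^sub>R axis i 1)^2 = norm x ^2 + 2*r*(x$i) + r^2"
proof -
  have "norm (x + r *\<^sub>R axis i 1)^2 = (x + r *\<^sub>R axis i 1) \<bullet> (x + r *\<^sub>R axis i 1)"
    by (rule power2_norm_eq_inner)
  also have "\<dots> = x \<bullet> x + 2*r*(x$i) + r^2"
    by (simp add: inner_add_left inner_add_right inner_axis inner_axis' inner_axis_axis algebra_simps power2_eq_square)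
  also have "x \<bullet> x = norm x ^2" by (simp add: power2_norm_eq_inner)
  finally show ?thesis .
qed

lemma max_princ:
  fixes w wt :: "real^'n \<Rightarrow> real \<Rightarrow> real" and Dw :: "real^'n \<Rightarrow> real \<Rightarrow> real^'n"
    and D2w :: "real^'n \<Rightarrow> real \<Rightarrow> real^'n^'n"
  assumes a: "a \<ge> 0"
    and cont: "continuous_on (UNIV \<times> {0..}) (\<lambda>p. w (fst p) (snd p))"
    and bnd: "\<And>T. \<exists>M. \<forall>x. \<forall>t\<in>{0..T}. w x t \<ge> -M"
    and init: "\<And>x. w x 0 \<ge> 0"
    and dt: "\<And>x t. t>0 \<Longrightarrow> ((\<lambda>s. w x s) has_real_derivative wt x t) (at t)"
    and dx: "\<And>x t. t>0 \<Longrightarrow> ((\<lambda>y. w y t) has_derivative (\<lambda>k. Dw x t \<bullet> k)) (at x)"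
    and dxx: "\<And>x t. t>0 \<Longrightarrow> ((\<lambda>y. Dw y t) has_derivative (\<lambda>k. D2w x t *v k)) (at x)"
    and ineq: "\<And>x t. t>0 \<Longrightarrow> w x t < 0 \<Longrightarrow> wt x t \<ge> a * lap_of (D2w x t) + K * w x t"
    and t1: "t1 \<ge> 0"
  shows "w x1 t1 \<ge> 0"
proof -
  define \<mu> where "\<mu> = 2*a*real CARD('n) + 1"
  have mu: "\<mu> \<ge> 1" using a by (simp add: \<mu>_def)
  have key: "exp(-K*t1) * w x1 t1 + \<delta>*(norm x1^2 + \<mu>*t1 + 1) \<ge> 0" if dpos: "\<delta> > 0" for \<delta>
  proof (rule ccontr)
    define z where "z p = exp(-K* snd p) * w (fst p) (snd p) + \<delta>*(norm (fst p)^2 + \<mu>* snd p + 1)"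
      for p :: "(real^'n) \<times> real"
    assume "\<not> ?thesis"
    hence z1: "z (x1,t1) < 0" by (simp add: z_def)
    obtain M0 where M0: "\<forall>x. \<forall>t\<in>{0..t1}. w x t \<ge> -M0" using bnd by blast
    define M where "M = max M0 0"
    define M' where "M' = exp(\<bar>K\<bar>*t1) * M"
    have M'0: "M' \<ge> 0" by (simp add: M'_def M_def)
    have lowb: "exp(-K*t) * w x t \<ge> -M'" if "t \<in> {0..t1}" for x t
    proof -
      have "w x t \<ge> -M0" using M0 that by auto
      moreover have "M0 \<le> M" by (simp add: M_def)
      ultimately have "w x t \<ge> -M" by linarith
      hence "exp(-K*t) * w x t \<ge> exp(-K*t) * (-M)" by (intro mult_left_mono) auto
      moreover have "exp(-K*t) * M \<le> exp(\<bar>K\<bar>*t1) * M"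
      proof (rule mult_right_mono)
        have "-K*t \<le> \<bar>K\<bar>*t1"
        proof -
          have "-K*t \<le> \<bar>K\<bar>*t" using that mult_right_mono[of "-K" "\<bar>K\<bar>" t] by simp
          also have "\<dots> \<le> \<bar>K\<bar>*t1" using that by (simp add: mult_left_mono)
          finally show ?thesis .
        qed
        thus "exp(-K*t) \<le> exp(\<bar>K\<bar>*t1)" by simp
      qed (simp add: M_def)
      ultimately show ?thesis by (simp add: M'_def)
    qed
    define R where "R = norm x1 + sqrt(M'/\<delta>) + 1"
    have q0: "M'/\<delta> \<ge> 0" using M'0 dpos by simp
    have sq: "sqrt(M'/\<delta>) \<ge> 0" using q0 by simp
    have R1: "norm x1 < R" using sq unfolding R_def by linarith
    have "sqrt(M'/\<delta>) < R" using norm_ge_zero[of x1] unfolding R_def by linarith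
    hence "sqrt(M'/\<delta>)^2 < R^2" using sq by (intro power_strict_mono) auto
    hence "M'/\<delta> < R^2" using q0 by simp
    hence RM: "M' < \<delta> * R^2" using dpos by (simp add: divide_less_eq mult.commute)
    define S where "S = cball (0::real^'n) R \<times> {0..t1}"
    have x1S: "(x1,t1) \<in> S" using R1 t1 by (simp add: S_def)
    have "compact S" unfolding S_def by (intro compact_Times) auto
    moreover have "S \<noteq> {}" using x1S by auto
    moreover have "continuous_on S z"
    proof -
      have c1: "continuous_on S (\<lambda>p. w (fst p) (snd p))"
        by (rule continuous_on_subset[OF cont]) (auto simp: S_def)
      show ?thesis unfolding z_def by (intro continuous_intros c1)
    qed
    ultimately obtain ps where psS: "ps \<in> S" and psmin: "\<And>p. p \<in> S \<Longrightarrow> z ps \<le> z p"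
      using continuous_attains_inf by metis
    obtain xs ts where ps: "ps = (xs,ts)" by (cases ps)
    have zs: "z (xs,ts) < 0" using psmin[OF x1S] z1 ps by simp
    have tsr: "ts \<in> {0..t1}" "norm xs \<le> R" using psS ps by (auto simp: S_def)
    have lb: "exp(-K*ts) * w xs ts \<ge> -M'" using lowb tsr by simp
    have ts0: "ts > 0"
    proof (rule ccontr)
      assume "\<not> ts > 0" hence "ts = 0" using tsr by simp
      hence "z (xs,ts) = w xs 0 + \<delta>*(norm xs^2 + 1)" by (simp add: z_def)
      moreover have "\<delta>*(norm xs^2 + 1) > 0" using dpos by (simp add: add_nonneg_pos)
      ultimately have "z (xs,ts) > 0" using init[of xs] by linarith
      thus False using zs by simp
    qed
    have xsR: "norm xs < R"
    proof (rule ccontr)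
      assume "\<not> norm xs < R" hence "norm xs = R" using tsr by simp
      hence "z (xs,ts) = exp(-K*ts) * w xs ts + \<delta>*R^2 + \<delta>*(\<mu>*ts + 1)" by (simp add: z_def algebra_simps)
      moreover have "\<delta>*(\<mu>*ts + 1) > 0" using dpos mu ts0 by (simp add: add_nonneg_pos)
      ultimately have "z (xs,ts) > 0" using lb RM by linarith
      thus False using zs by simp
    qed
    have wneg: "w xs ts < 0"
    proof (rule ccontr)
      assume "\<not> w xs ts < 0"
      hence "exp(-K*ts) * w xs ts \<ge> 0" by simp
      moreover have "\<delta>*(norm xs^2 + \<mu>*ts + 1) > 0" using dpos mu ts0 by (simp add: add_nonneg_pos)
      ultimately have "z (xs,ts) > 0" by (simp add: z_def)
      thus False using zs by simp
    qed
    define f where "f s = exp(-K * s) * w xs s + \<delta>*(norm xs^2 + \<mu> * s + 1)" for s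
    define f' where "f' = exp(-K*ts) * (-K) * w xs ts + exp(-K*ts) * wt xs ts + \<delta>*\<mu>"
    have fd: "(f has_real_derivative f') (at ts)"
      unfolding f_def f'_def using dt[OF ts0, of xs]
      by (auto intro!: derivative_eq_intros)
    have f'le: "f' \<le> 0"
    proof (rule ccontr)
      assume "\<not> f' \<le> 0"
      then obtain d where d: "d > 0" "\<forall>h>0. h < d \<longrightarrow> f (ts - h) < f ts"
        using DERIV_pos_inc_left[OF fd] by auto
      define h where "h = min d ts / 2"
      have h: "h > 0" "h < d" "h < ts" using d ts0 by (auto simp: h_def)
      have "(xs, ts - h) \<in> S" using h tsr by (auto simp: S_def)
      hence "z (xs,ts) \<le> z (xs, ts-h)" using psmin ps by simp
      moreover have "z (xs,ts) = f ts" "z (xs, ts-h) = f (ts - h)" by (simp_all add: z_def f_def)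
      ultimately show False using d h by auto
    qed
    have sec: "exp(-K*ts) * D2w xs ts $ i $ i + 2*\<delta> \<ge> 0" for i
    proof -
      define e :: "real^'n" where "e = axis i 1"
      define \<phi> where "\<phi> r = exp(-K*ts) * w (xs + r *\<^sub>R e) ts + \<delta>*(norm xs^2 + 2*r*(xs$i) + r^2 + \<mu>*ts + 1)" for r
      define \<phi>' where "\<phi>' r = exp(-K*ts) * (Dw (xs + r *\<^sub>R e) ts $ i) + \<delta>*(2*(xs$i) + 2*r)" for r
      have phiz: "\<phi> r = z (xs + r *\<^sub>R e, ts)" for r
        by (simp add: \<phi>_def z_def e_def norm_axis_sq algebra_simps)
      have eta: "R - norm xs > 0" using xsR by simp
      have mn: "\<phi> r \<ge> \<phi> 0" if "\<bar>r\<bar> < R - norm xs" for r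
      proof -
        have "norm (xs + r *\<^sub>R e) \<le> norm xs + \<bar>r\<bar>"
          using norm_triangle_ineq[of xs "r *\<^sub>R e"] by (simp add: e_def)
        hence "(xs + r *\<^sub>R e, ts) \<in> S" using that tsr by (auto simp: S_def)
        hence "z ps \<le> z (xs + r *\<^sub>R e, ts)" by (rule psmin)
        thus ?thesis using phiz[of r] phiz[of 0] ps by simp
      qed
      have d1: "(\<phi> has_real_derivative \<phi>' r) (at r)" for r
      proof -
        have "((\<lambda>r. w (xs + r *\<^sub>R axis i 1) ts) has_real_derivative (Dw (xs + r *\<^sub>R e) ts $ i)) (at r)"
          by (rule dir_deriv1) (use dx[OF ts0] e_def in auto)
        thus ?thesis unfolding \<phi>_def \<phi>'_def e_def
          by (auto intro!: derivative_eq_intros simp: algebra_simps)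
      qed
      have d2: "(\<phi>' has_real_derivative (exp(-K*ts) * D2w xs ts $ i $ i + 2*\<delta>)) (at 0)"
      proof -
        have "((\<lambda>r. Dw (xs + r *\<^sub>R axis i 1) ts $ i) has_real_derivative (D2w xs ts $ i $ i)) (at 0)"
          by (rule dir_deriv2) (use dxx[OF ts0] in auto)
        thus ?thesis unfolding \<phi>'_def e_def
          by (auto intro!: derivative_eq_intros simp: algebra_simps)
      qed
      show ?thesis by (rule second_deriv_min[OF eta mn d1 d2])
    qed
    have "(\<Sum>i\<in>UNIV. exp(-K*ts) * D2w xs ts $ i $ i + 2*\<delta>) \<ge> 0"
      by (rule sum_nonneg) (use sec in auto)
    moreover have "(\<Sum>i\<in>UNIV. exp(-K*ts) * D2w xs ts $ i $ i + 2*\<delta>)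
       = exp(-K*ts) * lap_of (D2w xs ts) + 2*\<delta>*real CARD('n)"
      by (simp add: lap_of_def sum.distrib sum_distrib_left)
    ultimately have lap: "exp(-K*ts) * lap_of (D2w xs ts) \<ge> - 2*\<delta>*real CARD('n)"
      by linarith
    have ie: "wt xs ts \<ge> a * lap_of (D2w xs ts) + K * w xs ts" by (rule ineq[OF ts0 wneg])
    have "exp(-K*ts) * (wt xs ts - K * w xs ts) \<ge> exp(-K*ts) * (a * lap_of (D2w xs ts))"
      using ie by (intro mult_left_mono) auto
    also have "exp(-K*ts) * (a * lap_of (D2w xs ts)) = a * (exp(-K*ts) * lap_of (D2w xs ts))" by simp
    also have "a * (exp(-K*ts) * lap_of (D2w xs ts)) \<ge> a * (- 2*\<delta>*real CARD('n))"
      using lap a by (intro mult_left_mono) auto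
    finally have "exp(-K*ts) * (wt xs ts - K * w xs ts) \<ge> - 2*a*\<delta>*real CARD('n)" by simp
    hence "f' \<ge> - 2*a*\<delta>*real CARD('n) + \<delta>*\<mu>" by (simp add: f'_def algebra_simps)
    also have "- 2*a*\<delta>*real CARD('n) + \<delta>*\<mu> = \<delta>" by (simp add: \<mu>_def algebra_simps)
    finally show False using f'le dpos by simp
  qed
  show ?thesis
  proof (rule ccontr)
    assume neg: "\<not> w x1 t1 \<ge> 0"
    define Q where "Q = norm x1^2 + \<mu>*t1 + 1"
    have Q: "Q > 0" using mu t1 by (simp add: Q_def add_nonneg_pos)
    have ew: "exp(-K*t1) * w x1 t1 < 0" using neg by (simp add: mult_pos_neg)
    define \<delta> where "\<delta> = - exp(-K*t1) * w x1 t1 / (2*Q)"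
    have "\<delta> > 0" using ew Q unfolding \<delta>_def by (intro divide_pos_pos) auto
    from key[OF this] have "exp(-K*t1) * w x1 t1 + \<delta>*Q \<ge> 0" by (simp add: Q_def)
    moreover have "\<delta>*Q = - exp(-K*t1) * w x1 t1 / 2" using Q by (simp add: \<delta>_def)
    ultimately show False using ew by linarith
  qed
qed


lemma mp2:
  fixes U Ut :: "real^'n \<Rightarrow> real \<Rightarrow> real" and DU :: "real^'n \<Rightarrow> real \<Rightarrow> real^'n"
    and D2U :: "real^'n \<Rightarrow> real \<Rightarrow> real^'n^'n" and g g' :: "real \<Rightarrow> real"
  assumes cb: "C_BUC U" and reg: "classical_reg U Ut DU D2U" and a: "a \<ge> 0"
    and gc: "continuous_on {0..} g"
    and gd: "\<And>t. t>0 \<Longrightarrow> (g has_real_derivative g' t) (at t)"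
    and init: "\<And>x. \<sigma> * U x 0 + g 0 \<ge> 0"
    and ineq: "\<And>x t. t>0 \<Longrightarrow> \<sigma> * U x t + g t < 0 \<Longrightarrow>
        \<sigma> * Ut x t + g' t \<ge> a * (\<sigma> * lap_of (D2U x t)) + K * (\<sigma> * U x t + g t)"
    and t: "t \<ge> 0"
  shows "\<sigma> * U x t + g t \<ge> 0"
proof -
  from reg have r1: "\<And>x t. t>0 \<Longrightarrow> ((\<lambda>s. U x s) has_real_derivative Ut x t) (at t)"
    and r3: "\<And>x t. t>0 \<Longrightarrow> ((\<lambda>y. U y t) has_derivative (\<lambda>k. DU x t \<bullet> k)) (at x)"
    and r4: "\<And>x t. t>0 \<Longrightarrow> ((\<lambda>y. DU y t) has_derivative (\<lambda>k. D2U x t *v k)) (at x)"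
    unfolding classical_reg_def by auto
  show ?thesis
  proof (rule max_princ[where w="\<lambda>x t. \<sigma> * U x t + g t" and wt="\<lambda>x t. \<sigma> * Ut x t + g' t"
        and Dw="\<lambda>x t. \<sigma> *\<^sub>R DU x t" and D2w="\<lambda>x t. \<sigma> *\<^sub>R D2U x t" and a=a and K=K, OF a])
    have c1: "continuous_on (UNIV \<times> {0..}) (\<lambda>p. U (fst p) (snd p))" by (rule joint_cont[OF cb])
    have c2: "continuous_on (UNIV \<times> {0..}) (\<lambda>p. g (snd p))"
      by (rule continuous_on_compose2[OF gc continuous_on_snd]) auto
    show "continuous_on (UNIV \<times> {0..}) (\<lambda>p. \<sigma> * U (fst p) (snd p) + g (snd p))"
      by (intro continuous_intros c1 c2)
  next
    fix T :: real
    obtain M where M: "\<forall>x. \<forall>t\<in>{0..T}. \<bar>U x t\<bar> \<le> M" using strip_bound[OF cb] by blast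
    have "compact (g ` {0..T})"
      by (rule compact_continuous_image[OF continuous_on_subset[OF gc]]) auto
    then obtain G where G: "\<forall>y\<in>g ` {0..T}. norm y \<le> G"
      using compact_imp_bounded bounded_iff by metis
    show "\<exists>M. \<forall>x. \<forall>t\<in>{0..T}. \<sigma> * U x t + g t \<ge> -M"
    proof (intro exI[of _ "\<bar>\<sigma>\<bar> * M + G"] allI ballI)
      fix x t assume tt: "t \<in> {0..T}"
      have "\<bar>\<sigma> * U x t\<bar> \<le> \<bar>\<sigma>\<bar> * M" using M tt by (simp add: abs_mult mult_left_mono)
      moreover have "\<bar>g t\<bar> \<le> G" using G tt by auto
      ultimately show "\<sigma> * U x t + g t \<ge> -(\<bar>\<sigma>\<bar> * M + G)" by linarith
    qed
  next
    fix x show "\<sigma> * U x 0 + g 0 \<ge> 0" by (rule init)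
  next
    fix x and t :: real assume "t > 0"
    show "((\<lambda>s. \<sigma> * U x s + g s) has_real_derivative \<sigma> * Ut x t + g' t) (at t)"
      using r1[OF \<open>t>0\<close>] gd[OF \<open>t>0\<close>] by (auto intro!: derivative_eq_intros)
  next
    fix x and t :: real assume "t > 0"
    have "((\<lambda>y. \<sigma> * U y t + g t) has_derivative (\<lambda>k. \<sigma> * (DU x t \<bullet> k) + 0)) (at x)"
      by (intro has_derivative_add has_derivative_mult_right r3[OF \<open>t>0\<close>] has_derivative_const)
    thus "((\<lambda>y. \<sigma> * U y t + g t) has_derivative (\<lambda>k. (\<sigma> *\<^sub>R DU x t) \<bullet> k)) (at x)"
      by simp
  next
    fix x and t :: real assume "t > 0"
    have "((\<lambda>y. \<sigma> *\<^sub>R DU y t) has_derivative (\<lambda>k. \<sigma> *\<^sub>R (D2U x t *v k))) (at x)"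
      by (intro has_derivative_scaleR_right r4[OF \<open>t>0\<close>])
    thus "((\<lambda>y. \<sigma> *\<^sub>R DU y t) has_derivative (\<lambda>k. (\<sigma> *\<^sub>R D2U x t) *v k)) (at x)"
      by (simp add: scaleR_matrix_vector_assoc)
  next
    fix x and t :: real assume tp: "t > 0" and neg: "\<sigma> * U x t + g t < 0"
    have "lap_of (\<sigma> *\<^sub>R D2U x t) = \<sigma> * lap_of (D2U x t)"
      by (simp add: lap_of_def sum_distrib_left)
    thus "\<sigma> * Ut x t + g' t \<ge> a * lap_of (\<sigma> *\<^sub>R D2U x t) + K * (\<sigma> * U x t + g t)"
      using ineq[OF tp neg] by simp
  qed (rule t)
qed

lemma ubar_id:
  fixes \<epsilon> h q ub :: real
  assumes "\<epsilon> > 0" "q > 0" "ub > q" "ub * (1 - ub) * (ub + q) - \<epsilon> * h * q * (ub - q) = 0"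
  shows "h * q * ((ub - q) / (ub + q)) = (1/\<epsilon>) * ub * (1 - ub)"
  using assms by (simp add: field_simps)

lemma H1:
  fixes \<epsilon> h q u v :: real
  assumes "\<epsilon> > 0" "h > 0" "q > 0" "0 \<le> u" "u < q" "q < 1" "v \<ge> 0"
  shows "(1/\<epsilon>) * u * (1 - u) - h * v * (u - q) / (u + q) \<ge> 0"
proof -
  have "(1/\<epsilon>) * u * (1 - u) \<ge> 0" using assms by simp
  moreover have "h * v * (u - q) \<le> 0" using assms by (simp add: mult_nonneg_nonpos)
  hence "h * v * (u - q) / (u + q) \<le> 0" using assms by (simp add: divide_nonpos_pos)
  ultimately show ?thesis by linarith
qed

lemma frac_mono:
  fixes q a b :: real
  assumes "q > 0" "a \<ge> 0" "a \<le> b"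
  shows "(a - q) / (a + q) \<le> (b - q) / (b + q)"
proof -
  have "(a - q) * (b + q) \<le> (b - q) * (a + q)"
    using mult_left_mono[OF assms(3), of q] assms by (simp add: algebra_simps)
  thus ?thesis using assms by (simp add: divide_simps)
qed

lemma H2:
  fixes \<epsilon> h q ub u v :: real
  assumes "\<epsilon> > 0" "h > 0" "q > 0" "q < ub" "ub < 1"
    "ub * (1 - ub) * (ub + q) - \<epsilon> * h * q * (ub - q) = 0" "u > ub" "v \<ge> q"
  shows "(1/\<epsilon>) * u * (1 - u) - h * v * (u - q) / (u + q) \<le> (1/\<epsilon>) * (u - ub)"
proof -
  have fr: "(u - q) / (u + q) \<ge> 0" using assms by simp
  have "(1/\<epsilon>) * ub * (1 - ub) = (h * q) * ((ub - q) / (ub + q))"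
    using ubar_id[of \<epsilon> q ub h] assms by simp
  also have "\<dots> \<le> (h * q) * ((u - q) / (u + q))"
    using assms frac_mono[of q ub u] by (intro mult_left_mono) auto
  also have "\<dots> \<le> (h * v) * ((u - q) / (u + q))"
    using assms fr by (intro mult_right_mono) auto
  also have "\<dots> = h * v * (u - q) / (u + q)" by simp
  finally have A: "h * v * (u - q) / (u + q) \<ge> (1/\<epsilon>) * ub * (1 - ub)" .
  have "u * (1 - u) - ub * (1 - ub) - (u - ub) = - ((u - ub) * (u + ub))" by (simp add: algebra_simps)
  also have "\<dots> \<le> 0" using assms by simp
  finally have "u * (1 - u) - ub * (1 - ub) \<le> u - ub" by simp
  hence "(1/\<epsilon>) * (u * (1 - u) - ub * (1 - ub)) \<le> (1/\<epsilon>) * (u - ub)"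
    using assms by (intro mult_left_mono) auto
  moreover have "(1/\<epsilon>) * (u * (1 - u) - ub * (1 - ub)) = (1/\<epsilon>) * u * (1 - u) - (1/\<epsilon>) * ub * (1 - ub)"
    by (simp only: mult.assoc right_diff_distrib)
  ultimately show ?thesis using A by linarith
qed

lemma H3:
  fixes \<epsilon> h q ub u v :: real
  assumes "\<epsilon> > 0" "h > 0" "q > 0" "q < ub" "ub < 1" "q \<le> u" "u \<le> ub" "q \<le> v" "v \<le> ub"
  shows "(1/\<epsilon>) * u * (1 - u) - h * v * (u - q) / (u + q) \<ge> q * (1 - ub) / \<epsilon> - (h * ub / (2*q)) * (u - q)"
proof -
  have "u * (1 - u) \<ge> q * (1 - ub)" using assms by (intro mult_mono) auto
  hence A: "(1/\<epsilon>) * u * (1 - u) \<ge> q * (1 - ub) / \<epsilon>"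
    using assms by (simp add: divide_right_mono)
  have fr: "(u - q) / (u + q) \<le> (u - q) / (2*q)"
    using assms by (intro divide_left_mono) auto
  have fr0: "(u - q) / (u + q) \<ge> 0" using assms by simp
  have "h * v * (u - q) / (u + q) = (h * v) * ((u - q) / (u + q))" by simp
  also have "\<dots> \<le> (h * ub) * ((u - q) / (u + q))"
    using assms fr0 by (intro mult_right_mono) auto
  also have "\<dots> \<le> (h * ub) * ((u - q) / (2*q))"
    using assms fr by (intro mult_left_mono) auto
  also have "\<dots> = (h * ub / (2*q)) * (u - q)" by simp
  finally show ?thesis using A by linarith
qed

lemma H4:
  fixes \<epsilon> h q ub u v :: real
  assumes "\<epsilon> > 0" "h > 0" "q > 0" "q < ub" "ub < 1"
    "ub * (1 - ub) * (ub + q) - \<epsilon> * h * q * (ub - q) = 0" "q \<le> u" "u \<le> ub" "v \<ge> q"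
  shows "(1/\<epsilon>) * u * (1 - u) - h * v * (u - q) / (u + q)
     \<le> (1/\<epsilon> + h/2) * (ub - u) - h * (v - q) * (u - q) / 2"
proof -
  have split: "h * v * (u - q) / (u + q) = h * q * ((u - q) / (u + q)) + h * (v - q) * (u - q) / (u + q)"
  proof -
    have "h * v * (u - q) = h * q * (u - q) + h * (v - q) * (u - q)" by (simp add: algebra_simps)
    hence "h * v * (u - q) / (u + q) = h * q * (u - q) / (u + q) + h * (v - q) * (u - q) / (u + q)"
      by (simp add: add_divide_distrib)
    thus ?thesis by simp
  qed
  have B: "h * (v - q) * (u - q) / (u + q) \<ge> h * (v - q) * (u - q) / 2"
    using assms by (intro divide_left_mono) auto
  have id: "(1/\<epsilon>) * ub * (1 - ub) = h * q * ((ub - q) / (ub + q))"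
    using ubar_id[of \<epsilon> q ub h] assms by simp
  have C: "(1/\<epsilon>) * u * (1 - u) - (1/\<epsilon>) * ub * (1 - ub) \<le> (1/\<epsilon>) * (ub - u)"
  proof -
    have "u * (1 - u) - ub * (1 - ub) = (ub - u) * (u + ub - 1)" by (simp add: algebra_simps)
    also have "\<dots> \<le> (ub - u) * 1" using assms by (intro mult_left_mono) auto
    finally have "u * (1 - u) - ub * (1 - ub) \<le> ub - u" by simp
    hence "(1/\<epsilon>) * (u * (1 - u) - ub * (1 - ub)) \<le> (1/\<epsilon>) * (ub - u)"
      using assms by (intro mult_left_mono) auto
    moreover have "(1/\<epsilon>) * (u * (1 - u) - ub * (1 - ub)) = (1/\<epsilon>) * u * (1 - u) - (1/\<epsilon>) * ub * (1 - ub)"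
      by (simp only: mult.assoc right_diff_distrib)
    ultimately show ?thesis by linarith
  qed
  have D: "h * q * ((ub - q) / (ub + q)) - h * q * ((u - q) / (u + q)) \<le> (h/2) * (ub - u)"
  proof -
    have "(ub - q) / (ub + q) - (u - q) / (u + q) = 2*q*(ub - u) / ((u + q) * (ub + q))"
      using assms by (simp add: field_simps)
    also have "\<dots> \<le> 2*q*(ub - u) / ((2*q) * (2*q))"
      using assms by (intro divide_left_mono mult_mono) auto
    also have "\<dots> = (ub - u) / (2*q)" using assms by (simp add: field_simps)
    finally have "(ub - q) / (ub + q) - (u - q) / (u + q) \<le> (ub - u) / (2*q)" .
    hence "h * q * ((ub - q) / (ub + q) - (u - q) / (u + q)) \<le> h * q * ((ub - u) / (2*q))"
      using assms by (intro mult_left_mono) auto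
    also have "\<dots> = (h/2) * (ub - u)" using assms by (simp add: field_simps)
    finally show ?thesis by (simp add: algebra_simps)
  qed
  have E: "(1/\<epsilon> + h/2) * (ub - u) = (1/\<epsilon>) * (ub - u) + (h/2) * (ub - u)"
    by (simp only: distrib_right)
  show ?thesis using split B id C D E by linarith
qed


lemma ar2: "(\<beta>::real)*(2*(1-e)*e) + \<beta>*(1-e)^2 = 2*\<beta>*(1-e) - \<beta>*(1-e)^2"
  by (simp add: algebra_simps power2_eq_square)

lemma ar4: "(\<sigma>::real)*(4*(1-e)^3*e) + \<sigma>*(1-e)^4 = 4*\<sigma>*(1-e)^3 - 3*(\<sigma>*(1-e)^4)"
  by (simp add: algebra_simps power2_eq_square power3_eq_cube power4_eq_xxxx)

lemma lin_c2:
  fixes vt dl v u q a1 a2 a3 d1 :: real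
  assumes "vt = dl - v + u" "u \<ge> q + a3" "a1 + a2 = a3 - a2" "a2 \<ge> 0" "d1 = dl"
  shows "1 * vt + - a1 \<ge> d1 + (-1) * (1 * v + - (q + a2))"
  using assms by simp

lemma lin_c4:
  fixes vt dl v u ub a1 a2 a3 d1 :: real
  assumes "vt = dl - v + u" "u \<le> ub - a3" "a1 + a2 = a3 - 3*a2" "a2 \<ge> 0" "d1 = - dl"
  shows "(-1) * vt + - a1 \<ge> d1 + (-1) * ((-1) * v + (ub - a2))"
  using assms by simp

lemma lin_c3:
  fixes ut lap F Lu hvu X Y a a' b b' E :: real
  assumes "ut = lap + F" "F \<le> Lu - hvu" "hvu \<ge> X" "Y \<le> X" "a \<le> a'" "b \<le> b'" "Y = a' + b'" "E = - Lu + a"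
  shows "(-1) * ut + - b \<ge> 1 * ((-1) * lap) + E"
  using assms by linarith

theorem theorem1:
  fixes \<epsilon> h d q ubar :: real
    and u0 v0 :: "real^'n \<Rightarrow> real"
    and u v :: "real^'n \<Rightarrow> real \<Rightarrow> real"
  assumes "\<epsilon> > 0" "h > 0" "d > 0" "0 < q" "q < 1"
    and "q < ubar" "ubar < 1"
    and "ubar * (1 - ubar) * (ubar + q) - \<epsilon> * h * q * (ubar - q) = 0"
    and "u0 \<in> BUC" "v0 \<in> BUC"
    and "\<forall>x. u0 x \<in> {q<..<ubar} \<and> v0 x \<in> {q<..<ubar}"
    and "BZ_solution \<epsilon> h q d u0 v0 u v"
  shows "\<forall>x. \<forall>t>0. u x t \<in> {q<..<ubar} \<and> v x t \<in> {q<..<ubar}"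
proof -
  note ep = assms(1) and hp = assms(2) and dp = assms(3) and qp = assms(4) and q1 = assms(5)
    and qu = assms(6) and u1 = assms(7) and gz = assms(8)
  have cu: "C_BUC u" and cv: "C_BUC v" and iu0: "\<And>x. u x 0 = u0 x" and iv0: "\<And>x. v x 0 = v0 x"
    and nn: "\<And>x t. t \<ge> 0 \<Longrightarrow> u x t \<ge> 0 \<and> v x t \<ge> 0"
    using assms(12) unfolding BZ_solution_def by auto
  obtain ut Du D2u vt Dv D2v where ru: "classical_reg u ut Du D2u" and rv: "classical_reg v vt Dv D2v"
    and pde: "\<forall>x. \<forall>t>0.
           ut x t = lap_of (D2u x t) + (1/\<epsilon>) * u x t * (1 - u x t)
                     - h * v x t * (u x t - q) / (u x t + q) \<and>
           vt x t = d * lap_of (D2v x t) - v x t + u x t"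
    using assms(12) unfolding BZ_solution_def by blast
  have pu: "\<And>x t. t > 0 \<Longrightarrow> ut x t = lap_of (D2u x t) + ((1/\<epsilon>) * u x t * (1 - u x t)
                     - h * v x t * (u x t - q) / (u x t + q))"
    using pde by auto
  have pv: "\<And>x t. t > 0 \<Longrightarrow> vt x t = d * lap_of (D2v x t) - v x t + u x t"
    using pde by auto
  have iu: "\<And>x. q < u x 0 \<and> u x 0 < ubar" and iv: "\<And>x. q < v x 0 \<and> v x 0 < ubar"
    using assms(11) iu0 iv0 by auto
  have iuL: "\<And>x. q \<le> u x 0" and iuU: "\<And>x. u x 0 \<le> ubar"
    and ivL: "\<And>x. q \<le> v x 0" and ivU: "\<And>x. v x 0 \<le> ubar"
    using iu iv less_imp_le by blast+

  have uq: "u x t \<ge> q" if "t \<ge> 0" for x t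
  proof -
    have "1 * u x t + (- q) \<ge> 0"
    proof (rule mp2[where U=u and Ut=ut and DU=Du and D2U=D2u and a=1 and K=0 and \<sigma>=1
          and g="\<lambda>_. - q" and g'="\<lambda>_. 0", OF cu ru])
      fix x :: "real^'n" and t :: real assume tp: "t > 0" and neg: "1 * u x t + - q < 0"
      show "1 * ut x t + 0 \<ge> 1 * (1 * lap_of (D2u x t)) + 0 * (1 * u x t + - q)"
        using pu[OF tp, of x] H1[of \<epsilon> h q "u x t" "v x t"] ep hp qp q1 neg nn[of t x] tp by simp
    qed (use that iuL in auto)
    thus ?thesis by simp
  qed
  have vq: "v x t \<ge> q" if "t \<ge> 0" for x t
  proof -
    have "1 * v x t + (- q) \<ge> 0"
    proof (rule mp2[where U=v and Ut=vt and DU=Dv and D2U=D2v and a=d and K="-1" and \<sigma>=1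
          and g="\<lambda>_. - q" and g'="\<lambda>_. 0", OF cv rv])
      fix x :: "real^'n" and t :: real assume tp: "t > 0" and neg: "1 * v x t + - q < 0"
      show "1 * vt x t + 0 \<ge> d * (1 * lap_of (D2v x t)) + (-1) * (1 * v x t + - q)"
        using pv[OF tp, of x] uq[of t x] tp by simp
    qed (use that ivL dp in auto)
    thus ?thesis by simp
  qed

  have uub: "u x t \<le> ubar" if "t \<ge> 0" for x t
  proof -
    have "(-1) * u x t + ubar \<ge> 0"
    proof (rule mp2[where U=u and Ut=ut and DU=Du and D2U=D2u and a=1 and K="1/\<epsilon>" and \<sigma>="-1"
          and g="\<lambda>_. ubar" and g'="\<lambda>_. 0", OF cu ru])
      fix x :: "real^'n" and t :: real assume tp: "t > 0" and neg: "(-1) * u x t + ubar < 0"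
      have "(1/\<epsilon>) * u x t * (1 - u x t) - h * v x t * (u x t - q) / (u x t + q) \<le> (1/\<epsilon>) * (u x t - ubar)"
        using H2[of \<epsilon> h q ubar "u x t" "v x t"] ep hp qp qu u1 gz neg vq[of t x] tp by simp
      moreover have "(1/\<epsilon>) * ((-1) * u x t + ubar) = - ((1/\<epsilon>) * (u x t - ubar))" by (simp add: algebra_simps)
      ultimately show "(-1) * ut x t + 0 \<ge> 1 * ((-1) * lap_of (D2u x t)) + (1/\<epsilon>) * ((-1) * u x t + ubar)"
        using pu[OF tp, of x] by simp
    qed (use that iuU in auto)
    thus ?thesis by simp
  qed
  have vub: "v x t \<le> ubar" if "t \<ge> 0" for x t
  proof -
    have "(-1) * v x t + ubar \<ge> 0"
    proof (rule mp2[where U=v and Ut=vt and DU=Dv and D2U=D2v and a=d and K="-1" and \<sigma>="-1"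
          and g="\<lambda>_. ubar" and g'="\<lambda>_. 0", OF cv rv])
      fix x :: "real^'n" and t :: real assume tp: "t > 0" and neg: "(-1) * v x t + ubar < 0"
      show "(-1) * vt x t + 0 \<ge> d * ((-1) * lap_of (D2v x t)) + (-1) * ((-1) * v x t + ubar)"
        using pv[OF tp, of x] uub[of t x] tp by simp
    qed (use that ivU dp in auto)
    thus ?thesis by simp
  qed
  text \<open>Step C: strict bounds via time-dependent barriers\<close>
  define A where "A = q * (1 - ubar) / \<epsilon>"
  define B where "B = h * ubar / (2*q)"
  define \<alpha> where "\<alpha> = A / (1 + B)"
  define \<beta> where "\<beta> = \<alpha> / 2"
  define L where "L = 1/\<epsilon> + h/2"
  define \<kappa> where "\<kappa> = min ((ubar - q)/2) (h * \<beta> * (ubar - q) / (4 * (L + 3)))"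
  define \<sigma>4 where "\<sigma>4 = \<kappa> / 4"
  have Ap: "A > 0" using qp u1 ep by (simp add: A_def)
  have Bp: "B > 0" using hp qu qp by (simp add: B_def)
  have ap: "\<alpha> > 0" using Ap Bp by (simp add: \<alpha>_def)
  have aB: "\<alpha> * (1 + B) = A" using Bp by (simp add: \<alpha>_def)
  have bp: "\<beta> > 0" using ap by (simp add: \<beta>_def)
  have Lp: "L > 0" using ep hp unfolding L_def by (intro add_pos_pos) auto
  have kp: "\<kappa> > 0" using qu hp bp Lp by (simp add: \<kappa>_def)
  have k1: "\<kappa> \<le> (ubar - q)/2" unfolding \<kappa>_def by (rule min.cobounded1)
  have k2: "\<kappa> * (L + 3) \<le> h * \<beta> * (ubar - q) / 4"
  proof -
    have "\<kappa> \<le> h * \<beta> * (ubar - q) / (4 * (L + 3))" unfolding \<kappa>_def by (rule min.cobounded2)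
    hence "\<kappa> * (L + 3) \<le> h * \<beta> * (ubar - q) / (4 * (L + 3)) * (L + 3)"
      using Lp by (intro mult_right_mono) auto
    also have "\<dots> = h * \<beta> * (ubar - q) / 4" using Lp by (simp add: field_simps)
    finally show ?thesis .
  qed
  have sp: "0 \<le> 1 - exp (- t)" "1 - exp (-t) \<le> 1" if "t \<ge> 0" for t :: real
    using that by auto

  have uC1: "u x t \<ge> q + \<alpha> * (1 - exp (- t))" if "t \<ge> 0" for x t
  proof -
    have "1 * u x t + (- (q + \<alpha> * (1 - exp (- t)))) \<ge> 0"
    proof (rule mp2[where U=u and Ut=ut and DU=Du and D2U=D2u and a=1 and K="-B" and \<sigma>=1
          and g="\<lambda>t. - (q + \<alpha> * (1 - exp (- t)))" and g'="\<lambda>t. - (\<alpha> * exp (- t))", OF cu ru])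
      fix x :: "real^'n" and t :: real assume tp: "t > 0"
      define s where "s = 1 - exp (- t)"
      have s01: "0 \<le> s" "s \<le> 1" using sp[of t] tp by (auto simp: s_def)
      have es: "exp (- t) = 1 - s" by (simp add: s_def)
      have F: "(1/\<epsilon>) * u x t * (1 - u x t) - h * v x t * (u x t - q) / (u x t + q) \<ge> A - B * (u x t - q)"
        using H3[OF ep hp qp qu u1 uq[of t x] uub[of t x] vq[of t x] vub[of t x]] tp
        unfolding A_def B_def by simp
      have "B * s \<le> B * 1" using Bp s01 by (intro mult_left_mono) auto
      hence "\<alpha> * (1 - s + B * s) \<le> \<alpha> * (1 + B)" using ap s01 by (intro mult_left_mono) auto
      moreover have "\<alpha> * (1 - s + B * s) = \<alpha> * (1 - s) + B * (\<alpha> * s)" by (simp add: algebra_simps)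
      ultimately have G': "\<alpha> * (1 - s) + B * (\<alpha> * s) \<le> A" using aB by linarith
      hence G: "\<alpha> * exp (- t) + B * (\<alpha> * (1 - exp (- t))) \<le> A" unfolding s_def by simp
      have E: "(- B) * (1 * u x t + - (q + \<alpha> * (1 - exp (- t)))) = - (B * (u x t - q)) + B * (\<alpha> * (1 - exp (- t)))"
        by (simp add: algebra_simps)
      have P: "ut x t = lap_of (D2u x t) + ((1/\<epsilon>) * u x t * (1 - u x t) - h * v x t * (u x t - q) / (u x t + q))"
        by (rule pu[OF tp])
      show "1 * ut x t + - (\<alpha> * exp (- t)) \<ge> 1 * (1 * lap_of (D2u x t)) + (- B) * (1 * u x t + - (q + \<alpha> * (1 - exp (- t))))"
        unfolding E using P F G by linarith
    next
      fix t :: real assume "t > 0"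
      show "((\<lambda>t. - (q + \<alpha> * (1 - exp (- t)))) has_real_derivative - (\<alpha> * exp (- t))) (at t)"
        by (auto intro!: derivative_eq_intros)
    qed (use that iuL in \<open>auto intro!: continuous_intros\<close>)
    thus ?thesis by simp
  qed
  have vC2: "v x t \<ge> q + \<beta> * (1 - exp (- t))^2" if "t \<ge> 0" for x t
  proof -
    have "1 * v x t + (- (q + \<beta> * (1 - exp (- t))^2)) \<ge> 0"
    proof (rule mp2[where U=v and Ut=vt and DU=Dv and D2U=D2v and a=d and K="-1" and \<sigma>=1
          and g="\<lambda>t. - (q + \<beta> * (1 - exp (- t))^2)" and g'="\<lambda>t. - (\<beta> * (2 * (1 - exp (- t)) * exp (- t)))", OF cv rv])
      fix x :: "real^'n" and t :: real assume tp: "t > 0"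
      have U: "u x t \<ge> q + \<alpha> * (1 - exp (- t))" using uC1[of t x] tp by simp
      have K1: "\<beta>*(2*(1-exp (- t))*exp (- t)) + \<beta>*(1-exp (- t))^2 = 2*\<beta>*(1-exp (- t)) - \<beta>*(1-exp (- t))^2"
        by (rule ar2)
      have K2: "\<beta>*(1-exp (- t))^2 \<ge> 0" using bp by simp
      have K3: "2*\<beta>*(1-exp (- t)) = \<alpha> * (1 - exp (- t))" by (simp add: \<beta>_def)
      have P: "vt x t = d * lap_of (D2v x t) - v x t + u x t" by (rule pv[OF tp])
      have D: "d * (1 * lap_of (D2v x t)) = d * lap_of (D2v x t)" by simp
      show "1 * vt x t + - (\<beta> * (2 * (1 - exp (- t)) * exp (- t))) \<ge> d * (1 * lap_of (D2v x t)) + (-1) * (1 * v x t + - (q + \<beta> * (1 - exp (- t))^2))"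
        by (rule lin_c2[OF P U K1[unfolded K3] K2 D])
    next
      fix t :: real assume "t > 0"
      show "((\<lambda>t. - (q + \<beta> * (1 - exp (- t))^2)) has_real_derivative - (\<beta> * (2 * (1 - exp (- t)) * exp (- t)))) (at t)"
        by (auto intro!: derivative_eq_intros)
    qed (use that ivL dp in \<open>auto intro!: continuous_intros\<close>)
    thus ?thesis by simp
  qed

  have uC3: "u x t \<le> ubar - \<kappa> * (1 - exp (- t))^3" if "t \<ge> 0" for x t
  proof -
    have "(-1) * u x t + (ubar - \<kappa> * (1 - exp (- t))^3) \<ge> 0"
    proof (rule mp2[where U=u and Ut=ut and DU=Du and D2U=D2u and a=1 and K="-L" and \<sigma>="-1"
          and g="\<lambda>t. ubar - \<kappa> * (1 - exp (- t))^3" and g'="\<lambda>t. - (\<kappa> * (3 * (1 - exp (- t))^2 * exp (- t)))", OF cu ru])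
      fix x :: "real^'n" and t :: real assume tp: "t > 0"
        and neg: "(-1) * u x t + (ubar - \<kappa> * (1 - exp (- t))^3) < 0"
      define s where "s = 1 - exp (- t)"
      define e where "e = exp (- t)"
      have s01: "0 \<le> s" "s \<le> 1" using sp[of t] tp by (auto simp: s_def)
      have e01: "0 \<le> e" "e \<le> 1" using tp by (auto simp: e_def)
      have uq': "q \<le> u x t" "u x t \<le> ubar" "q \<le> v x t" using uq[of t x] uub[of t x] vq[of t x] tp by auto
      have H: "(1/\<epsilon>) * u x t * (1 - u x t) - h * v x t * (u x t - q) / (u x t + q)
             \<le> L * (ubar - u x t) - h * (v x t - q) * (u x t - q) / 2"
        using H4[OF ep hp qp qu u1 gz uq'] unfolding L_def .
      have V: "v x t - q \<ge> \<beta> * s^2" using vC2[of t x] tp by (simp add: s_def)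
      have s3: "s^3 \<le> 1" using s01 by (simp add: power_le_one)
      have "\<kappa> * s^3 \<le> \<kappa> * 1" using kp s3 by (intro mult_left_mono) auto
      hence Uq: "u x t - q \<ge> (ubar - q)/2" using neg k1 by (simp add: s_def)
      have Q2: "(v x t - q) * (u x t - q) \<ge> (\<beta> * s^2) * ((ubar - q)/2)"
        using V Uq bp qu uq'(3) by (intro mult_mono) auto
      have "h * ((\<beta> * s^2) * ((ubar - q)/2)) \<le> h * ((v x t - q) * (u x t - q))"
        using Q2 hp by (intro mult_left_mono) auto
      hence "h * ((\<beta> * s^2) * ((ubar - q)/2)) / 2 \<le> h * ((v x t - q) * (u x t - q)) / 2"
        by (rule divide_right_mono) simp
      moreover have "h * (v x t - q) * (u x t - q) / 2 = h * ((v x t - q) * (u x t - q)) / 2" by simp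
      moreover have "s^2 * (h * \<beta> * (ubar - q) / 4) = h * ((\<beta> * s^2) * ((ubar - q)/2)) / 2"
        by (simp add: field_simps)
      ultimately have Q3: "h * (v x t - q) * (u x t - q) / 2 \<ge> s^2 * (h * \<beta> * (ubar - q) / 4)"
        by simp
      have Q5: "s^2 * (\<kappa> * (L + 3)) \<le> s^2 * (h * \<beta> * (ubar - q) / 4)"
        using k2 by (intro mult_left_mono) auto
      have "s^3 \<le> s^2"
      proof -
        have "s^2 * s \<le> s^2 * 1" using s01 by (intro mult_left_mono) auto
        thus ?thesis by (simp add: power3_eq_cube power2_eq_square)
      qed
      hence "\<kappa> * s^3 \<le> \<kappa> * s^2" by (rule mult_left_mono[OF _ less_imp_le[OF kp]])
      hence Q6: "L * (\<kappa> * s^3) \<le> L * (\<kappa> * s^2)" by (rule mult_left_mono[OF _ less_imp_le[OF Lp]])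
      have "3 * s^2 * e \<le> 3 * s^2 * 1" using e01 by (intro mult_left_mono) auto
      hence Q7: "\<kappa> * (3 * s^2 * e) \<le> \<kappa> * (3 * s^2)" by (simp add: mult_left_mono[OF _ less_imp_le[OF kp]])
      have Q8: "s^2 * (\<kappa> * (L + 3)) = L * (\<kappa> * s^2) + \<kappa> * (3 * s^2)" by (simp add: algebra_simps)
      have E: "(- L) * ((-1) * u x t + (ubar - \<kappa> * s^3)) = - (L * (ubar - u x t)) + L * (\<kappa> * s^3)"
        by (simp add: algebra_simps)
      have P: "ut x t = lap_of (D2u x t) + ((1/\<epsilon>) * u x t * (1 - u x t) - h * v x t * (u x t - q) / (u x t + q))"
        by (rule pu[OF tp])
      have "(-1) * ut x t + - (\<kappa> * (3 * s^2 * e)) \<ge> 1 * ((-1) * lap_of (D2u x t)) + (- L) * ((-1) * u x t + (ubar - \<kappa> * s^3))"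
        by (rule lin_c3[OF P H Q3 Q5 Q6 Q7 Q8 E])
      thus "(-1) * ut x t + - (\<kappa> * (3 * (1 - exp (- t))^2 * exp (- t))) \<ge> 1 * ((-1) * lap_of (D2u x t)) + (- L) * ((-1) * u x t + (ubar - \<kappa> * (1 - exp (- t))^3))"
        unfolding s_def e_def .
    next
      fix t :: real assume "t > 0"
      show "((\<lambda>t. ubar - \<kappa> * (1 - exp (- t))^3) has_real_derivative - (\<kappa> * (3 * (1 - exp (- t))^2 * exp (- t)))) (at t)"
        by (auto intro!: derivative_eq_intros)
    qed (use that iuU in \<open>auto intro!: continuous_intros\<close>)
    thus ?thesis by simp
  qed

  have vC4: "v x t \<le> ubar - \<sigma>4 * (1 - exp (- t))^4" if "t \<ge> 0" for x t
  proof -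
    have "(-1) * v x t + (ubar - \<sigma>4 * (1 - exp (- t))^4) \<ge> 0"
    proof (rule mp2[where U=v and Ut=vt and DU=Dv and D2U=D2v and a=d and K="-1" and \<sigma>="-1"
          and g="\<lambda>t. ubar - \<sigma>4 * (1 - exp (- t))^4" and g'="\<lambda>t. - (\<sigma>4 * (4 * (1 - exp (- t))^3 * exp (- t)))", OF cv rv])
      fix x :: "real^'n" and t :: real assume tp: "t > 0"
      have U: "u x t \<le> ubar - \<kappa> * (1 - exp (- t))^3" using uC3[of t x] tp by simp
      have K1: "\<sigma>4*(4*(1-exp (- t))^3*exp (- t)) + \<sigma>4*(1-exp (- t))^4 = 4*\<sigma>4*(1-exp (- t))^3 - 3*(\<sigma>4*(1-exp (- t))^4)"
        by (rule ar4)
      have K2: "\<sigma>4*(1-exp (- t))^4 \<ge> 0" using kp by (simp add: \<sigma>4_def)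
      have K3: "4*\<sigma>4*(1-exp (- t))^3 = \<kappa> * (1 - exp (- t))^3" by (simp add: \<sigma>4_def)
      have P: "vt x t = d * lap_of (D2v x t) - v x t + u x t" by (rule pv[OF tp])
      have D: "d * ((-1) * lap_of (D2v x t)) = - (d * lap_of (D2v x t))" by simp
      show "(-1) * vt x t + - (\<sigma>4 * (4 * (1 - exp (- t))^3 * exp (- t))) \<ge> d * ((-1) * lap_of (D2v x t)) + (-1) * ((-1) * v x t + (ubar - \<sigma>4 * (1 - exp (- t))^4))"
        by (rule lin_c4[OF P U K1[unfolded K3] K2 D])
    next
      fix t :: real assume "t > 0"
      show "((\<lambda>t. ubar - \<sigma>4 * (1 - exp (- t))^4) has_real_derivative - (\<sigma>4 * (4 * (1 - exp (- t))^3 * exp (- t)))) (at t)"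
        by (auto intro!: derivative_eq_intros)
    qed (use that ivU dp in \<open>auto intro!: continuous_intros\<close>)
    thus ?thesis by simp
  qed

  show ?thesis
  proof (intro allI impI)
    fix x and t :: real assume tp: "t > 0"
    define s where "s = 1 - exp (- t)"
    have spos: "s > 0" using tp by (simp add: s_def)
    have "\<alpha> * s > 0" using ap spos by simp
    moreover have "\<kappa> * s^3 > 0" using kp spos by simp
    moreover have "\<beta> * s^2 > 0" using bp spos by simp
    moreover have "\<sigma>4 * s^4 > 0" using kp spos by (simp add: \<sigma>4_def)
    moreover have "u x t \<ge> q + \<alpha> * s" "u x t \<le> ubar - \<kappa> * s^3"
      "v x t \<ge> q + \<beta> * s^2" "v x t \<le> ubar - \<sigma>4 * s^4"
      using uC1[of t x] uC3[of t x] vC2[of t x] vC4[of t x] tp by (simp_all add: s_def)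
    ultimately show "u x t \<in> {q<..<ubar} \<and> v x t \<in> {q<..<ubar}" by auto
  qed
qed

end
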